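(* Let $a_m=\binom{2m-1}{m}$ for $m\ge1$ (so $a_1,a_2,\dots=1,3,10,35,126,\dots$), and let the integers $T_{nj},U_{nj}$ be as defined below. Then for all $n\ge1$: $$\sum_{j=0}^n a_{n+j}T_{nj}=1,\qquad \sum_{j=0}^{n+1}a_{n+j}U_{nj}=3.$$
   Context: The numbers $T_{nj},U_{nj}$ (integers $n\ge0$, $j$) are defined by: $T_{nj}=U_{nj}=0$ whenever $j<0$; $T_{0j}=0$ for all $j\ge1$, $U_{01}=-1$, $U_{0j}=0$ for all $j\ge2$; $T_{10}=4$, $U_{10}=4$; and for all $n\ge1$, $j\ge0$ with $(n,j)\ne(1,0)$: $T_{nj}=-3T_{n-1,j}+U_{n-1,j}$ and $U_{nj}=-4T_{n-1,j}+U_{n-1,j}+T_{n,j-1}$. *)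

theory Defs
  imports Main
begin

definition a_seq :: "nat \<Rightarrow> int" where
  "a_seq m = int ((2 * m - 1) choose m)"

text \<open>TU n j = (T_{nj}, U_{nj}) for j \<ge> 0; values for j < 0 are 0 and
  enter only through the term T_{n,j-1}, which is 0 when j = 0.
  T_{00}, U_{00} are not specified in the paper and never used; we set them to 0.\<close>
fun TU :: "nat \<Rightarrow> nat \<Rightarrow> int \<times> int" where
  "TU 0 j = (0, if j = 1 then -1 else 0)"
| "TU (Suc 0) 0 = (4, 4)"
| "TU (Suc (Suc n)) 0 =
     (-3 * fst (TU (Suc n) 0) + snd (TU (Suc n) 0),
      -4 * fst (TU (Suc n) 0) + snd (TU (Suc n) 0))"
| "TU (Suc n) (Suc j) =
     (-3 * fst (TU n (Suc j)) + snd (TU n (Suc j)),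
      -4 * fst (TU n (Suc j)) + snd (TU n (Suc j)) + fst (TU (Suc n) j))"

definition T :: "nat \<Rightarrow> nat \<Rightarrow> int" where "T n j = fst (TU n j)"
definition U :: "nat \<Rightarrow> nat \<Rightarrow> int" where "U n j = snd (TU n j)"

end

theory Submission
  imports Defs
begin

lemma T0[simp]: "T 0 j = 0" by (simp add: T_def)
lemma U0[simp]: "U 0 j = (if j = 1 then -1 else 0)" by (simp add: U_def)
lemma T10[simp]: "T (Suc 0) 0 = 4" by (simp add: T_def)
lemma U10[simp]: "U (Suc 0) 0 = 4" by (simp add: U_def)

lemma T_rec: "n \<ge> 1 \<or> j \<ge> 1 \<Longrightarrow> T (Suc n) j = -3 * T n j + U n j"
  by (cases j; cases n) (auto simp: T_def U_def)

lemma U_rec0: "n \<ge> 1 \<Longrightarrow> U (Suc n) 0 = -4 * T n 0 + U n 0"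
  by (cases n) (auto simp: T_def U_def)

lemma U_recS: "U (Suc n) (Suc j) = -4 * T n (Suc j) + U n (Suc j) + T (Suc n) j"
  by (simp add: T_def U_def)

lemma vanish: "(\<forall>j>n. T n j = 0) \<and> (\<forall>j>n+1. U n j = 0)"
proof (induction n)
  case 0
  then show ?case by auto
next
  case (Suc n)
  have A: "\<forall>j>Suc n. T (Suc n) j = 0"
  proof (intro allI impI)
    fix j assume "j > Suc n"
    then show "T (Suc n) j = 0" using Suc T_rec[of n j] by auto
  qed
  have "\<forall>j>Suc n + 1. U (Suc n) j = 0"
  proof (intro allI impI)
    fix j assume j: "j > Suc n + 1"
    then obtain j' where "j = Suc j'" by (cases j) auto
    then show "U (Suc n) j = 0" using j Suc A U_recS[of n j'] by auto
  qed
  with A show ?case by blast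
qed

definition SA :: "nat \<Rightarrow> nat \<Rightarrow> int" where
  "SA n k = (\<Sum>j\<le>n. a_seq (k + j) * T n j)"
definition SB :: "nat \<Rightarrow> nat \<Rightarrow> int" where
  "SB n k = (\<Sum>j\<le>n+1. a_seq (k + j) * U n j)"

lemma extA: "n \<le> M \<Longrightarrow> (\<Sum>j\<le>M. a_seq (k + j) * T n j) = SA n k"
  unfolding SA_def by (rule sum.mono_neutral_right) (use vanish in auto)

lemma extB: "n + 1 \<le> M \<Longrightarrow> (\<Sum>j\<le>M. a_seq (k + j) * U n j) = SB n k"
  unfolding SB_def by (rule sum.mono_neutral_right) (use vanish in auto)

lemma recT: "n \<ge> 1 \<Longrightarrow> (\<Sum>j\<le>M. a_seq (k + j) * T (Suc n) j)
   = -3 * (\<Sum>j\<le>M. a_seq (k + j) * T n j) + (\<Sum>j\<le>M. a_seq (k + j) * U n j)"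
  by (simp add: T_rec sum_distrib_left sum.distrib sum_subtractf sum_negf algebra_simps)

lemma recU: "n \<ge> 1 \<Longrightarrow> (\<Sum>j\<le>Suc M. a_seq (k + j) * U (Suc n) j)
   = -4 * (\<Sum>j\<le>Suc M. a_seq (k + j) * T n j) + (\<Sum>j\<le>Suc M. a_seq (k + j) * U n j)
     + (\<Sum>j\<le>M. a_seq (k + 1 + j) * T (Suc n) j)"
  apply (simp only: sum.atMost_Suc_shift)
  apply (simp add: U_rec0 U_recS sum_distrib_left sum.distrib sum_subtractf sum_negf algebra_simps)
  done

lemma SA_Suc: "n \<ge> 1 \<Longrightarrow> SA (Suc n) k = -3 * SA n k + SB n k"
proof -
  assume n: "n \<ge> 1"
  have "SA (Suc n) k = (\<Sum>j\<le>Suc n. a_seq (k + j) * T (Suc n) j)" by (simp add: SA_def)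
  also have "\<dots> = -3 * (\<Sum>j\<le>Suc n. a_seq (k + j) * T n j) + (\<Sum>j\<le>Suc n. a_seq (k + j) * U n j)"
    using recT[OF n] .
  also have "\<dots> = -3 * SA n k + SB n k"
    using extA[of n "Suc n" k] by (simp add: SB_def)
  finally show ?thesis .
qed

lemma SB_Suc: "n \<ge> 1 \<Longrightarrow> SB (Suc n) k = -4 * SA n k + SB n k + SA (Suc n) (k + 1)"
proof -
  assume n: "n \<ge> 1"
  have "SB (Suc n) k = (\<Sum>j\<le>Suc (Suc n). a_seq (k + j) * U (Suc n) j)" by (simp add: SB_def)
  also have "\<dots> = -4 * (\<Sum>j\<le>Suc (Suc n). a_seq (k + j) * T n j) + (\<Sum>j\<le>Suc (Suc n). a_seq (k + j) * U n j)
     + (\<Sum>j\<le>Suc n. a_seq (k + 1 + j) * T (Suc n) j)"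
    using recU[OF n] .
  also have "\<dots> = -4 * SA n k + SB n k + SA (Suc n) (k + 1)"
  proof -
    have e1: "(\<Sum>j\<le>Suc (Suc n). a_seq (k + j) * T n j) = SA n k" by (rule extA) simp
    have e2: "(\<Sum>j\<le>Suc (Suc n). a_seq (k + j) * U n j) = SB n k" by (rule extB) simp
    show ?thesis unfolding e1 e2 SA_def by simp
  qed
  finally show ?thesis .
qed

lemma SA0: "SA 0 k = 0" by (simp add: SA_def)
lemma SA1: "SA (Suc 0) k = 4 * a_seq k - a_seq (k + 1)"
  by (simp add: SA_def T_rec)
lemma SB1: "SB 1 k = SA 1 k + SA 1 (k + 1)"
  by (simp add: SA1 SB_def numeral_2_eq_2 T_rec U_recS)

lemma SA_rec: "SA (n + 2) k = -2 * SA (n + 1) k - SA n k + SA (n + 1) (k + 1)"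
proof (cases n)
  case 0
  then show ?thesis using SA_Suc[of 1 k] SB1[of k] SA0[of k] by (simp add: numeral_2_eq_2)
next
  case (Suc m)
  have 1: "SA (n + 2) k = -3 * SA (n+1) k + SB (n+1) k" using SA_Suc[of "n+1" k] Suc by simp
  have 2: "SB (n+1) k = -4 * SA n k + SB n k + SA (n+1) (k+1)" using SB_Suc[of n k] Suc by simp
  have 3: "SA (n+1) k = -3 * SA n k + SB n k" using SA_Suc[of n k] Suc by simp
  show ?thesis using 1 2 3 by simp
qed


definition c :: "nat \<Rightarrow> int \<Rightarrow> int" where
  "c k i = (if i < 0 then 0 else int ((2 * k - 1) choose nat i))"
definition d :: "nat \<Rightarrow> int \<Rightarrow> int" where
  "d k i = c k i - c k (i - 1)"

lemma choose_two: "Suc (Suc m) choose Suc (Suc j) = (m choose j) + 2 * (m choose Suc j) + (m choose Suc (Suc j))"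
  by simp

lemma cpas: "k \<ge> 1 \<Longrightarrow> c (Suc k) i = c k i + 2 * c k (i - 1) + c k (i - 2)"
proof -
  assume k: "k \<ge> 1"
  define m where "m = 2 * k - 1"
  have m: "2 * Suc k - 1 = Suc (Suc m)" using k by (simp add: m_def)
  have m2: "2 * k - Suc 0 = m" by (simp add: m_def)
  have mi: "int m = 2 * int k - 1" using k by (simp add: m_def of_nat_diff)
  have m3: "Suc (2 * k) = Suc (Suc m)" using k by (simp add: m_def)
  show ?thesis
  proof (cases "i < 0")
    case True then show ?thesis by (simp add: c_def)
  next
    case False
    have "i = 0 \<or> i = 1 \<or> (\<exists>j::nat. i = int j + 2)"
    proof -
      have "i \<ge> 2 \<Longrightarrow> i = int (nat (i - 2)) + 2" by simp
      then show ?thesis using False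
      proof (cases "i \<ge> 2")
        case True
        then have "i = int (nat (i - 2)) + 2" by simp
        then show ?thesis by blast
      qed auto
    qed
    then consider "i = 0" | "i = 1" | j where "i = int j + 2" by blast
    then show ?thesis
    proof cases
      case 1 then show ?thesis by (simp add: c_def m m2)
    next
      case 2 then show ?thesis by (simp add: c_def m m2 mi)
    next
      case 3
      have "nat i = Suc (Suc j)" "nat (i - 1) = Suc j" "nat (i - 2) = j" using 3 by auto
      then show ?thesis using 3 by (simp add: c_def m m2 m3 del: binomial_Suc_Suc add: choose_two)
    qed
  qed
qed

lemma csym: "k \<ge> 1 \<Longrightarrow> c k i = c k (2 * int k - 1 - i)"
proof -
  assume k: "k \<ge> 1"
  define m where "m = 2 * k - 1"
  have mi: "int m = 2 * int k - 1" using k by (simp add: m_def)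
  have m2: "2 * k - Suc 0 = m" by (simp add: m_def)
  consider "i < 0" | "i > int m" | "0 \<le> i \<and> i \<le> int m" by linarith
  then show ?thesis
  proof cases
    case 1
    then have "m < nat (int m - i)" by linarith
    then show ?thesis using 1 by (simp add: c_def m2 mi[symmetric] binomial_eq_0)
  next
    case 2
    then show ?thesis by (simp add: c_def m2 mi[symmetric] binomial_eq_0)
  next
    case 3
    then have e: "nat (int m - i) = m - nat i" by auto
    have "nat i \<le> m" using 3 by linarith
    then show ?thesis using 3 e binomial_symmetric[of "nat i" m]
      by (simp add: c_def m2 mi[symmetric])
  qed
qed

lemma a_c: "a_seq m = c m (int m)" by (simp add: a_seq_def c_def)

lemma closed: "(\<forall>k. k \<ge> 1 \<and> n \<le> k + 1 \<longrightarrow> SA n k = d k (int k - int n))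
   \<and> (\<forall>k. k \<ge> 1 \<and> Suc n \<le> k + 1 \<longrightarrow> SA (Suc n) k = d k (int k - int (Suc n)))"
proof (induction n)
  case 0
  have A: "\<forall>k. k \<ge> 1 \<longrightarrow> SA 0 k = d k (int k)"
  proof (intro allI impI)
    fix k :: nat assume k: "k \<ge> 1"
    have "c k (int k - 1) = c k (int k)" using csym[OF k, of "int k - 1"] by simp
    then show "SA 0 k = d k (int k)" by (simp add: SA0 d_def)
  qed
  have B: "\<forall>k. k \<ge> 1 \<longrightarrow> SA (Suc 0) k = d k (int k - 1)"
  proof (intro allI impI)
    fix k :: nat assume k: "k \<ge> 1"
    have s1: "c k (int k - 1) = c k (int k)" using csym[OF k, of "int k - 1"] by simp
    have s2: "c k (int k + 1) = c k (int k - 2)" using csym[OF k, of "int k + 1"] by simp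
    have "a_seq (k + 1) = c k (int k + 1) + 2 * c k (int k) + c k (int k - 1)"
    proof -
      have "a_seq (k + 1) = c (Suc k) (int k + 1)" using a_c[of "Suc k"] by (simp add: add.commute)
      then show ?thesis using cpas[OF k, of "int k + 1"] by simp
    qed
    then show "SA (Suc 0) k = d k (int k - 1)"
      using s1 s2 by (simp add: SA1 d_def a_c)
  qed
  show ?case using A B by simp
next
  case (Suc n)
  have "\<forall>k. k \<ge> 1 \<and> Suc (Suc n) \<le> k + 1 \<longrightarrow> SA (Suc (Suc n)) k = d k (int k - int (Suc (Suc n)))"
  proof (intro allI impI)
    fix k :: nat assume kk: "k \<ge> 1 \<and> Suc (Suc n) \<le> k + 1"
    then have k: "k \<ge> 1" by simp
    have h1: "SA n k = d k (int k - int n)" using Suc kk by auto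
    have h2: "SA (Suc n) k = d k (int k - int (Suc n))" using Suc kk by auto
    have h3: "SA (Suc n) (k+1) = d (k+1) (int (k+1) - int (Suc n))" using Suc kk by auto
    have r: "SA (Suc (Suc n)) k = -2 * SA (Suc n) k - SA n k + SA (Suc n) (k + 1)"
      using SA_rec[of n k] by simp
    define i where "i = int k - int n - 2"
    have p1: "c (Suc k) (i + 2) = c k (i+2) + 2 * c k (i + 1) + c k i"
      using cpas[OF k, of "i+2"] by (simp add: algebra_simps)
    have p2: "c (Suc k) (i + 1) = c k (i+1) + 2 * c k i + c k (i - 1)"
      using cpas[OF k, of "i+1"] by (simp add: algebra_simps)
    show "SA (Suc (Suc n)) k = d k (int k - int (Suc (Suc n)))"
    proof -
      have i0: "int k - int (Suc (Suc n)) = i" "int k - int (Suc n) = i + 1" "int k - int n = i + 2"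
        "int (k + 1) - int (Suc n) = i + 2" by (simp_all add: i_def)
      have dd: "d k i = c k i - c k (i - 1)" "d k (i+1) = c k (i+1) - c k i" "d k (i+2) = c k (i+2) - c k (i+1)"
        "d (k+1) (i+2) = c (Suc k) (i+2) - c (Suc k) (i+1)"
      proof -
        have q: "i + 1 - 1 = i" "i + 2 - 1 = i + 1" "k + 1 = Suc k" by simp_all
        show "d k i = c k i - c k (i - 1)" "d k (i+1) = c k (i+1) - c k i" "d k (i+2) = c k (i+2) - c k (i+1)"
        "d (k+1) (i+2) = c (Suc k) (i+2) - c (Suc k) (i+1)" by (unfold d_def q; rule refl)+
      qed
      have h1': "SA n k = d k (i+2)" by (metis h1 i0(3))
      have h2': "SA (Suc n) k = d k (i+1)" by (metis h2 i0(2))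
      have h3': "SA (Suc n) (k+1) = d (k+1) (i+2)" by (metis h3 i0(4))
      show ?thesis unfolding i0(1) using r h1' h2' h3' dd p1 p2 by linarith
    qed
  qed
  then show ?case using Suc by blast
qed

theorem proposition7p1:
  fixes n :: nat
  assumes "n \<ge> 1"
  shows "(\<Sum>j = 0..n. a_seq (n + j) * T n j) = 1
       \<and> (\<Sum>j = 0..n + 1. a_seq (n + j) * U n j) = 3"
proof -
  have e1: "(\<Sum>j = 0..n. a_seq (n + j) * T n j) = SA n n" by (simp add: SA_def atLeast0AtMost)
  have e2: "(\<Sum>j = 0..n+1. a_seq (n + j) * U n j) = SB n n" by (simp add: SB_def atLeast0AtMost)
  have A0: "SA n n = d n (int n - int n)" using conjunct1[OF closed[of n], rule_format, of n] assms by simp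
  have B0: "SA (Suc n) n = d n (int n - int (Suc n))" using conjunct2[OF closed[of n], rule_format, of n] assms by simp
  have A: "SA n n = 1" using A0 by (simp add: d_def c_def)
  have B: "SA (Suc n) n = 0" using B0 by (simp add: d_def c_def)
  have "SB n n = SA (Suc n) n + 3 * SA n n" using SA_Suc[OF assms, of n] by simp
  with A B show ?thesis using e1 e2 by simp
qed

end
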